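(* Let $r,s$ be positive integers, let $k=2^{8}r^{2}$ and let $c\ge 8rs\binom{k}{r}$. Let $M$ be an $n\times n$ zero-one matrix such that $k\mid n$ and $w(M)\ge cn^{3/2}$. Then either (i) $M$ contains an $\frac nk\times\frac nk$ matrix $N$ with $w(N)\ge 2c\left(\frac nk\right)^{3/2}$, or (ii) for some positive integer $m$, $M$ contains an $\frac{nr}{k}\times m$ matrix $N$ that is $r$-balanced and satisfies $w(N)\ge rs\sqrt{m}\left(\frac{nr}{k}\right)$.
   Context: $w(M)$ is the number of $1$-entries of $M$; $M$ contains $N$ if one can delete some rows and columns of $M$ and turn some $1$-entries into $0$-entries so that the result is $N$. An $a\times m$ zero-one matrix $N$ is $r$-balanced if $r\mid a$ and for every column $c\in[m]$ the number of $1$-entries among $N((i-1)\frac ar+1,c),\dots,N(i\frac ar,c)$ is the same for all $i\in[r]$. *)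

theory Defs
  imports Complex_Main
begin

text \<open>A zero-one matrix with a rows and b columns is represented by a function
  M :: nat => nat => bool, where M i j (for i < a, j < b) means entry (i,j) is 1.
  Entries outside the index range are ignored.\<close>

type_synonym zmat = "nat \<Rightarrow> nat \<Rightarrow> bool"

definition weight :: "nat \<Rightarrow> nat \<Rightarrow> zmat \<Rightarrow> nat" where
  "weight a b M = card {(i, j). i < a \<and> j < b \<and> M i j}"

definition contains :: "nat \<Rightarrow> nat \<Rightarrow> zmat \<Rightarrow> nat \<Rightarrow> nat \<Rightarrow> zmat \<Rightarrow> bool" where
  "contains a b M a' b' N \<longleftrightarrow>
     (\<exists>f g. strict_mono_on {..<a'} f \<and> f ` {..<a'} \<subseteq> {..<a} \<and>
            strict_mono_on {..<b'} g \<and> g ` {..<b'} \<subseteq> {..<b} \<and>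
            (\<forall>i<a'. \<forall>j<b'. N i j \<longrightarrow> M (f i) (g j)))"

definition col_count :: "zmat \<Rightarrow> nat \<Rightarrow> nat \<Rightarrow> nat \<Rightarrow> nat" where
  "col_count N c lo hi = card {i. lo \<le> i \<and> i < hi \<and> N i c}"

definition r_balanced :: "nat \<Rightarrow> nat \<Rightarrow> nat \<Rightarrow> zmat \<Rightarrow> bool" where
  "r_balanced r a m N \<longleftrightarrow> r dvd a \<and>
     (\<forall>c<m. \<forall>i\<in>{1..r}. \<forall>i'\<in>{1..r}.
        col_count N c ((i - 1) * (a div r)) (i * (a div r)) =
        col_count N c ((i' - 1) * (a div r)) (i' * (a div r)))"

end

theory Submission
  imports Defs
begin

lemma enum_set:
  assumes "finite (S::nat set)" "card S = m"
  shows "\<exists>g. strict_mono_on {..<m} g \<and> g ` {..<m} = S"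
proof -
  define xs where "xs = sorted_list_of_set S"
  have s: "sorted_wrt (<) xs" by (simp add: xs_def strict_sorted_list_of_set)
  have l: "length xs = m" using assms by (simp add: xs_def)
  have st: "set xs = S" using assms by (simp add: xs_def)
  show ?thesis
  proof (intro exI conjI)
    show "strict_mono_on {..<m} (\<lambda>i. xs ! i)"
      unfolding strict_mono_on_def using s l by (auto intro: sorted_wrt_nth_less)
    show "(\<lambda>i. xs ! i) ` {..<m} = S"
      using l st by (auto simp: set_conv_nth)
  qed
qed

lemma card_Suc_filter:
  "card {u. u < Suc b \<and> Q u} = card {u. u < b \<and> Q u} + (if Q b then 1 else 0)"
proof -
  have "{u. u < Suc b \<and> Q u} = (if Q b then insert b {u. u < b \<and> Q u} else {u. u < b \<and> Q u})"
    by (auto simp: less_Suc_eq)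
  then show ?thesis by simp
qed

lemma card_trunc:
  "card {u. u < (b::nat) \<and> P u \<and> card {u'. u' < u \<and> P u'} < t} = min t (card {u. u < b \<and> P u})"
proof (induction b)
  case 0 then show ?case by simp
next
  case (Suc b)
  show ?case
    using Suc card_Suc_filter[of b "\<lambda>u. P u \<and> card {u'. u' < u \<and> P u'} < t"]
      card_Suc_filter[of b P] by auto
qed

lemma card_blocks:
  "card {x. x < k * (b::nat) \<and> P x} = (\<Sum>i<k. card {u. u < b \<and> P (i * b + u)})"
proof (induction k)
  case 0 then show ?case by simp
next
  case (Suc k)
  have eq: "{x. x < Suc k * b \<and> P x} = {x. x < k * b \<and> P x} \<union> (\<lambda>u. k * b + u) ` {u. u < b \<and> P (k * b + u)}"
    by (auto simp: image_iff) (metis add.commute less_diff_conv2 not_le_imp_less le_add_diff_inverse)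
  have "card {x. x < Suc k * b \<and> P x} = card {x. x < k * b \<and> P x} + card ((\<lambda>u. k * b + u) ` {u. u < b \<and> P (k * b + u)})"
    unfolding eq by (rule card_Un_disjoint) auto
  also have "card ((\<lambda>u. k * b + u) ` {u. u < b \<and> P (k * b + u)}) = card {u. u < b \<and> P (k * b + u)}"
    by (rule card_image) (auto simp: inj_on_def)
  finally show ?case using Suc by simp
qed

lemma weight_cols:
  "weight a b N = (\<Sum>j<b. card {i. i < a \<and> N i j})"
proof -
  have eq: "{(i, j). i < a \<and> j < b \<and> N i j} = (\<lambda>(j,i). (i,j)) ` (SIGMA j:{..<b}. {i. i < a \<and> N i j})"
    by auto
  have "card {(i, j). i < a \<and> j < b \<and> N i j} = card (SIGMA j:{..<b}. {i. i < a \<and> N i j})"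
    unfolding eq by (rule card_image) (auto simp: inj_on_def)
  then show ?thesis unfolding weight_def by simp
qed

lemma weight_le: "weight n n M \<le> n * n"
proof -
  have "{(i, j). i < n \<and> j < n \<and> M i j} \<subseteq> {..<n} \<times> {..<n}" by auto
  then have "card {(i, j). i < n \<and> j < n \<and> M i j} \<le> card ({..<n} \<times> {..<n})"
    by (intro card_mono) auto
  then show ?thesis unfolding weight_def by (simp add: card_cartesian_product)
qed

lemma powr32: "(z::real) \<ge> 0 \<Longrightarrow> z powr (3/2) = z * sqrt z"
proof -
  assume z: "z \<ge> 0"
  have "z powr (3/2) = z powr (1 + 1/2)" by (simp add: field_simps)
  also have "\<dots> = z powr 1 * z powr (1/2)" by (rule powr_add)
  also have "\<dots> = z * sqrt z" using z by (cases "z = 0") (simp_all add: powr_half_sqrt)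
  finally show ?thesis .
qed

lemma col_block:
  "card {p. q * b \<le> p \<and> p < q * b + b \<and> N p j} = card {u. u < (b::nat) \<and> N (q * b + u) j}"
proof -
  have "{p. q * b \<le> p \<and> p < q * b + b \<and> N p j} = (\<lambda>u. q * b + u) ` {u. u < b \<and> N (q * b + u) j}"
    by (auto simp: image_iff) (metis add.commute less_diff_conv2 le_add_diff_inverse)
  then show ?thesis by (simp add: card_image inj_on_def)
qed

lemma build_balanced:
  fixes M :: zmat and k b r m t :: nat
  assumes bpos: "b > 0" and rpos: "r > 0"
    and R: "R \<subseteq> {..<k}" "card R = r" and S: "S \<subseteq> {..<k*b}" "card S = m"
    and big: "\<forall>j\<in>S. \<forall>i\<in>R. t \<le> card {u. u < b \<and> M (i*b+u) j}"
  shows "\<exists>N. contains (k*b) (k*b) M (r*b) m N \<and> r_balanced r (r*b) m N \<and> weight (r*b) m N = m*(r*t)"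
proof -
  have fR: "finite R" using R finite_subset by blast
  have fS: "finite S" using S finite_subset by blast
  obtain e where e: "strict_mono_on {..<r} e" "e ` {..<r} = R" using enum_set[OF fR R(2)] by blast
  obtain g where g: "strict_mono_on {..<m} g" "g ` {..<m} = S" using enum_set[OF fS S(2)] by blast
  define f where "f p = e (p div b) * b + p mod b" for p
  define N where "N p j = (M (f p) (g j) \<and> card {u'. u' < p mod b \<and> M (e (p div b) * b + u') (g j)} < t)" for p j
  have key: "card {u. u < b \<and> N (q*b+u) j} = t" if q: "q < r" and j: "j < m" for q j
  proof -
    have dm: "(q*b+u) div b = q" "(q*b+u) mod b = u" if "u < b" for u
      using that bpos by simp_all
    have seq: "{u. u < b \<and> N (q*b+u) j} = {u. u < b \<and> M (e q * b + u) (g j) \<and> card {u'. u' < u \<and> M (e q * b + u') (g j)} < t}"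
    proof (rule Collect_cong)
      fix u show "(u < b \<and> N (q*b+u) j) = (u < b \<and> M (e q * b + u) (g j) \<and> card {u'. u' < u \<and> M (e q * b + u') (g j)} < t)"
        by (cases "u < b") (simp_all add: N_def f_def dm)
    qed
    have "g j \<in> S" "e q \<in> R" using g e q j by auto
    then have "t \<le> card {u. u < b \<and> M (e q * b + u) (g j)}" using big by blast
    then show ?thesis unfolding seq card_trunc by simp
  qed
  have fmono: "strict_mono_on {..<r*b} f"
  proof (rule strict_mono_onI)
    fix p p' assume p: "p \<in> {..<r*b}" and p': "p' \<in> {..<r*b}" and lt: "p < p'"
    have q': "p' div b < r" using p' bpos by (simp add: less_mult_imp_div_less)
    have qq: "p div b \<le> p' div b" using lt by (simp add: div_le_mono)
    show "f p < f p'"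
    proof (cases "p div b = p' div b")
      case True
      then have "p mod b < p' mod b" using lt
        by (metis div_mult_mod_eq add_less_cancel_left nat_neq_iff less_asym)
      then show ?thesis using True by (simp add: f_def)
    next
      case False
      then have "p div b < p' div b" using qq by simp
      then have "e (p div b) < e (p' div b)" using e(1) q' by (auto simp: strict_mono_on_def)
      then have "e (p div b) + 1 \<le> e (p' div b)" by simp
      then have "(e (p div b) + 1) * b \<le> e (p' div b) * b" by (rule mult_right_mono) simp
      moreover have "p mod b < b" using bpos by simp
      ultimately show ?thesis by (simp add: f_def algebra_simps)
    qed
  qed
  have fimg: "f ` {..<r*b} \<subseteq> {..<k*b}"
  proof
    fix x assume "x \<in> f ` {..<r*b}"
    then obtain p where p: "p < r*b" and x: "x = f p" by auto
    have "p div b < r" using p bpos by (simp add: less_mult_imp_div_less)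
    then have "e (p div b) \<in> R" using e by auto
    then have "e (p div b) + 1 \<le> k" using R by auto
    then have "(e (p div b) + 1) * b \<le> k * b" by (rule mult_right_mono) simp
    moreover have "p mod b < b" using bpos by simp
    ultimately show "x \<in> {..<k*b}" by (simp add: x f_def algebra_simps)
  qed
  have cont: "contains (k*b) (k*b) M (r*b) m N"
    unfolding contains_def
    using fmono fimg g S by (intro exI[of _ f] exI[of _ g]) (auto simp: N_def)
  have bal: "r_balanced r (r*b) m N"
  proof -
    have cc: "col_count N c ((i - 1) * (r * b div r)) (i * (r * b div r)) = t"
      if c: "c < m" and i: "i \<in> {1..r}" for c i
    proof -
      have ib: "i * b = (i - 1) * b + b" using i by (cases i) auto
      have "col_count N c ((i - 1) * (r * b div r)) (i * (r * b div r)) = card {p. (i-1) * b \<le> p \<and> p < (i-1) * b + b \<and> N p c}"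
        using rpos ib unfolding col_count_def by simp
      also have "\<dots> = card {u. u < b \<and> N ((i-1) * b + u) c}" by (rule col_block)
      also have "\<dots> = t" using key c i by auto
      finally show ?thesis .
    qed
    show ?thesis unfolding r_balanced_def using cc by simp
  qed
  have "weight (r*b) m N = (\<Sum>j<m. card {p. p < r * b \<and> N p j})" by (rule weight_cols)
  also have "\<dots> = (\<Sum>j<m. \<Sum>q<r. card {u. u < b \<and> N (q * b + u) j})"
    by (simp add: card_blocks)
  also have "\<dots> = (\<Sum>j<m. \<Sum>q<r. t)" using key by simp
  also have "\<dots> = m * (r * t)" by simp
  finally show ?thesis using cont bal by blast
qed

lemma block_sub:
  fixes M :: zmat
  assumes i: "i < k" and S: "S \<subseteq> {..<k*b}" "card S = b"
  shows "\<exists>N. contains (k*b) (k*b) M b b N \<and> weight b b N = (\<Sum>j\<in>S. card {u. u < b \<and> M (i*b+u) j})"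
proof -
  have fS: "finite S" using S finite_subset by blast
  obtain g where g: "strict_mono_on {..<b} g" "g ` {..<b} = S" using enum_set[OF fS S(2)] by blast
  define N where "N p j = M (i*b + p) (g j)" for p j
  have f1: "strict_mono_on {..<b} (\<lambda>p. i*b + p)" by (auto simp: strict_mono_on_def)
  have f2: "(\<lambda>p. i*b + p) ` {..<b} \<subseteq> {..<k*b}"
  proof
    fix x assume "x \<in> (\<lambda>p. i*b + p) ` {..<b}"
    then obtain p where p: "p < b" "x = i*b+p" by auto
    have "(i + 1) * b \<le> k * b" using i by (intro mult_right_mono) auto
    then show "x \<in> {..<k*b}" using p by (simp add: algebra_simps)
  qed
  have cont: "contains (k*b) (k*b) M b b N"
    unfolding contains_def N_def using f1 f2 g S by (intro exI[of _ "\<lambda>p. i*b + p"] exI[of _ g]) auto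
  have "weight b b N = (\<Sum>j<b. card {p. p < b \<and> M (i*b+p) (g j)})" by (simp add: weight_cols N_def)
  also have "\<dots> = (\<Sum>j\<in>g ` {..<b}. card {u. u < b \<and> M (i*b+u) j})"
    by (rule sum.reindex[symmetric, unfolded comp_def]) (rule strict_mono_on_imp_inj_on[OF g(1)])
  finally show ?thesis using cont g(2) by blast
qed

lemma heavy_bound:
  fixes v :: "nat \<Rightarrow> nat" and B :: real
  assumes bn: "b \<le> n"
    and all: "\<And>S. S \<subseteq> {..<n} \<Longrightarrow> card S = b \<Longrightarrow> real (\<Sum>j\<in>S. v j) < B"
    and TB: "B \<le> real b * real T"
  shows "real (\<Sum>j\<in>{j. j < n \<and> T < v j}. v j) < B"
proof -
  define H where "H = {j. j < n \<and> T < v j}"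
  have Hs: "H \<subseteq> {..<n}" and fH: "finite H" by (auto simp: H_def)
  have cH: "card H < b"
  proof (rule ccontr)
    assume "\<not> card H < b"
    then obtain S where S: "S \<subseteq> H" "card S = b" "finite S" by (meson not_less obtain_subset_with_card_n)
    have "(\<Sum>j\<in>S. T) \<le> (\<Sum>j\<in>S. v j)" using S by (intro sum_mono) (auto simp: H_def)
    then have "b * T \<le> (\<Sum>j\<in>S. v j)" using S by simp
    then have "real (b * T) \<le> real (\<Sum>j\<in>S. v j)" by (simp only: of_nat_le_iff)
    then have "real b * real T \<le> real (\<Sum>j\<in>S. v j)" by (simp only: of_nat_mult)
    moreover have "real (\<Sum>j\<in>S. v j) < B" using S Hs by (intro all) auto
    ultimately show False using TB by linarith
  qed
  have "card H + (b - card H) \<le> card H + card ({..<n} - H)" using bn Hs fH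
    by (simp add: card_Diff_subset)
  then obtain S' where S': "S' \<subseteq> {..<n} - H" "card S' = b - card H" "finite S'"
    by (meson add_le_cancel_left obtain_subset_with_card_n)
  have cU: "card (H \<union> S') = b" using S' cH fH by (subst card_Un_disjoint) auto
  have "(\<Sum>j\<in>H. v j) \<le> (\<Sum>j\<in>H \<union> S'. v j)" using S' fH by (intro sum_mono2) auto
  moreover have "real (\<Sum>j\<in>H \<union> S'. v j) < B" using cU S' Hs by (intro all) auto
  ultimately show ?thesis unfolding H_def[symmetric] by linarith
qed

lemma card_as_sum: "finite B \<Longrightarrow> card {t\<in>B. P t} = (\<Sum>t\<in>B. if P t then 1 else (0::nat))"
  by (simp add: sum.inter_filter[symmetric])

lemma count_swap:
  assumes "finite A" "finite B"
  shows "(\<Sum>j\<in>A. card {t\<in>B. P j t}) = (\<Sum>t\<in>B. card {j\<in>A. P j t})"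
  using assms by (simp add: card_as_sum sum.swap[of _ A B])

lemma col_ineq:
  fixes a :: "nat \<Rightarrow> nat"
  assumes ab: "\<And>i. i < k \<Longrightarrow> a i \<le> b"
  shows "(\<Sum>i<k. a i) \<le> k * card {t\<in>{1..b}. r \<le> card {i. i < k \<and> t \<le> a i}} + (r - 1) * T
           + (\<Sum>i<k. if T < a i then a i else 0)"
proof -
  define D where "D t = card {i. i < k \<and> t \<le> a i}" for t
  have ai: "a i = card {t\<in>{1..b}. t \<le> a i}" if "i < k" for i
  proof -
    have "{t\<in>{1..b}. t \<le> a i} = {1..a i}" using ab[OF that] by auto
    then show ?thesis by simp
  qed
  have "(\<Sum>i<k. a i) = (\<Sum>i<k. card {t\<in>{1..b}. t \<le> a i})" using ai by (intro sum.cong) auto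
  also have "\<dots> = (\<Sum>t\<in>{1..b}. card {i\<in>{..<k}. t \<le> a i})" by (rule count_swap) auto
  also have "\<dots> = (\<Sum>t\<in>{1..b}. D t)" by (simp add: D_def)
  finally have e1: "(\<Sum>i<k. a i) = (\<Sum>t\<in>{1..b}. D t)" .
  have pw: "D t \<le> (if r \<le> D t then k else 0) + (if t \<le> T then r - 1 else 0)
              + card {i\<in>{..<k}. T < t \<and> t \<le> a i}" for t
  proof -
    have Dk: "D t \<le> k" unfolding D_def by (rule order.trans[OF card_mono[of "{..<k}"]]) auto
    have "D t = card {i\<in>{..<k}. T < t \<and> t \<le> a i}" if "T < t" using that by (simp add: D_def)
    then show ?thesis using Dk by (cases "r \<le> D t"; cases "t \<le> T") auto
  qed
  have "(\<Sum>t\<in>{1..b}. D t) \<le> (\<Sum>t\<in>{1..b}. (if r \<le> D t then k else 0) + (if t \<le> T then r - 1 else 0)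
              + card {i\<in>{..<k}. T < t \<and> t \<le> a i})" by (intro sum_mono pw)
  also have "\<dots> = k * card {t\<in>{1..b}. r \<le> D t} + (r - 1) * card {t\<in>{1..b}. t \<le> T}
       + (\<Sum>i<k. card {t\<in>{1..b}. T < t \<and> t \<le> a i})"
  proof -
    have x1: "(\<Sum>t\<in>{1..b}. (if r \<le> D t then k else 0)) = k * card {t\<in>{1..b}. r \<le> D t}"
      unfolding card_as_sum[OF finite_atLeastAtMost] sum_distrib_left by (rule sum.cong) auto
    have x2: "(\<Sum>t\<in>{1..b}. (if t \<le> T then r - 1 else 0)) = (r - 1) * card {t\<in>{1..b}. t \<le> T}"
      unfolding card_as_sum[OF finite_atLeastAtMost] sum_distrib_left by (rule sum.cong) auto
    have x3: "(\<Sum>t\<in>{1..b}. card {i\<in>{..<k}. T < t \<and> t \<le> a i}) = (\<Sum>i<k. card {t\<in>{1..b}. T < t \<and> t \<le> a i})"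
      by (rule count_swap[symmetric]) auto
    show ?thesis by (simp only: sum.distrib x1 x2 x3)
  qed
  also have "\<dots> \<le> k * card {t\<in>{1..b}. r \<le> D t} + (r - 1) * T + (\<Sum>i<k. if T < a i then a i else 0)"
  proof -
    have "card {t\<in>{1..b}. t \<le> T} \<le> card {1..T}" by (rule card_mono) auto
    then have "(r - 1) * card {t\<in>{1..b}. t \<le> T} \<le> (r - 1) * T" by simp
    moreover have "card {t\<in>{1..b}. T < t \<and> t \<le> a i} \<le> (if T < a i then a i else 0)" for i
    proof (cases "T < a i")
      case True
      have "card {t\<in>{1..b}. T < t \<and> t \<le> a i} \<le> card {1..a i}" by (rule card_mono) auto
      then show ?thesis using True by simp
    next
      case False
      then have "{t\<in>{1..b}. T < t \<and> t \<le> a i} = {}" by auto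
      then show ?thesis using False by simp
    qed
    then have "(\<Sum>i<k. card {t\<in>{1..b}. T < t \<and> t \<le> a i}) \<le> (\<Sum>i<k. if T < a i then a i else 0)"
      by (intro sum_mono)
    ultimately show ?thesis by linarith
  qed
  finally show ?thesis using e1 by (simp add: D_def)
qed

lemma pigeon:
  fixes a :: "nat \<Rightarrow> nat \<Rightarrow> nat"
  assumes fA: "finite A" and rk: "r \<le> k"
    and big: "\<And>j. j \<in> A \<Longrightarrow> r \<le> card {i. i < k \<and> t \<le> a i j}"
  shows "\<exists>R S. R \<subseteq> {..<k} \<and> card R = r \<and> S \<subseteq> A \<and> card A \<le> card S * (k choose r)
            \<and> (\<forall>j\<in>S. \<forall>i\<in>R. t \<le> a i j)"
proof -
  define P where "P = {R. R \<subseteq> {..<k} \<and> card R = r}"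
  have cP: "card P = k choose r" unfolding P_def using n_subsets[of "{..<k}" r] by simp
  have fP: "finite P" unfolding P_def by (rule finite_subset[of _ "Pow {..<k}"]) auto
  define Rc where "Rc j = (SOME R. R \<subseteq> {i. i < k \<and> t \<le> a i j} \<and> card R = r)" for j
  have Rc: "Rc j \<subseteq> {i. i < k \<and> t \<le> a i j} \<and> card (Rc j) = r" if jA: "j \<in> A" for j
  proof -
    obtain R where "R \<subseteq> {i. i < k \<and> t \<le> a i j}" "card R = r"
      using obtain_subset_with_card_n[OF big[OF jA]] by blast
    then show ?thesis unfolding Rc_def
      using someI[of "\<lambda>R. R \<subseteq> {i. i < k \<and> t \<le> a i j} \<and> card R = r" R] by blast
  qed
  have RcP: "Rc j \<in> P" if "j \<in> A" for j using Rc[OF that] by (auto simp: P_def)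
  have "\<exists>R\<in>P. card A \<le> card {j\<in>A. Rc j = R} * (k choose r)"
  proof (rule ccontr)
    assume "\<not> ?thesis"
    then have lt: "card {j\<in>A. Rc j = R} * (k choose r) < card A" if "R \<in> P" for R using that by auto
    have Pne: "P \<noteq> {}"
    proof -
      obtain R where "R \<subseteq> {..<k}" "card R = r" using obtain_subset_with_card_n[of r "{..<k}"] rk by auto
      then show ?thesis by (auto simp: P_def)
    qed
    have eq: "(\<Union>R\<in>P. {j\<in>A. Rc j = R}) = A" using RcP by blast
    have "card (\<Union>R\<in>P. {j\<in>A. Rc j = R}) \<le> (\<Sum>R\<in>P. card {j\<in>A. Rc j = R})"
      by (rule card_UN_le[OF fP])
    then have "card A \<le> (\<Sum>R\<in>P. card {j\<in>A. Rc j = R})" by (simp only: eq)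
    then have "card A * (k choose r) \<le> (\<Sum>R\<in>P. card {j\<in>A. Rc j = R} * (k choose r))"
      by (simp add: sum_distrib_right[symmetric])
    also have "\<dots> < (\<Sum>R\<in>P. card A)" using lt fP Pne by (intro sum_strict_mono) auto
    also have "\<dots> = card A * (k choose r)" using cP by simp
    finally show False by simp
  qed
  then obtain R where R: "R \<in> P" "card A \<le> card {j\<in>A. Rc j = R} * (k choose r)" by blast
  show ?thesis
  proof (intro exI conjI)
    show "R \<subseteq> {..<k}" "card R = r" using R by (auto simp: P_def)
    show "{j\<in>A. Rc j = R} \<subseteq> A" by auto
    show "card A \<le> card {j\<in>A. Rc j = R} * (k choose r)" by (rule R(2))
    show "\<forall>j\<in>{j\<in>A. Rc j = R}. \<forall>i\<in>R. t \<le> a i j" using Rc by blast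
  qed
qed

lemma tele:
  assumes t0: "t0 \<ge> (1::nat)"
  shows "(\<Sum>t\<in>{t0<..b}. 1 / (real t)^2) \<le> 1 / real t0"
proof -
  have "b \<ge> t0 \<Longrightarrow> (\<Sum>t\<in>{t0<..b}. 1 / (real t)^2) \<le> 1 / real t0 - 1 / real b"
  proof (induction b rule: dec_induct)
    case base then show ?case by simp
  next
    case (step b)
    have bpos: "real b \<ge> 1" using step t0 by simp
    have "{t0<..Suc b} = insert (Suc b) {t0<..b}" using step by auto
    then have "(\<Sum>t\<in>{t0<..Suc b}. 1 / (real t)^2) = 1 / (real b + 1)^2 + (\<Sum>t\<in>{t0<..b}. 1 / (real t)^2)"
      by simp
    moreover have e: "1 / real b - 1 / (real b + 1) = 1 / (real b * (real b + 1))"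
      using bpos by (simp add: field_simps)
    have "1 / (real b + 1)^2 \<le> 1 / (real b * (real b + 1))"
      using bpos by (intro divide_left_mono mult_pos_pos) (auto simp: power2_eq_square)
    then have "1 / (real b + 1)^2 \<le> 1 / real b - 1 / (real b + 1)" using e by simp
    ultimately show ?case using step.IH by (simp add: add.commute)
  qed
  then show ?thesis
  proof (cases "b \<ge> t0")
    case True
    then show ?thesis using \<open>b \<ge> t0 \<Longrightarrow> _\<close> by (smt (verit) of_nat_0_le_iff divide_nonneg_nonneg)
  next
    case False
    then have "{t0<..b} = {}" by auto
    then show ?thesis by simp
  qed
qed

lemma sum_min_bound:
  fixes G :: "nat \<Rightarrow> real" and n K :: real
  assumes n: "n > 0" and K: "K > 0"
    and G1: "\<And>t. t \<in> {1..b} \<Longrightarrow> G t \<le> n" and G2: "\<And>t. t \<in> {1..b} \<Longrightarrow> G t \<le> K / (real t)^2"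
  shows "(\<Sum>t\<in>{1..b}. G t) \<le> 2 * sqrt (n*K) + n"
proof -
  define y where "y = sqrt (K / n)"
  have y: "y > 0" using n K by (simp add: y_def)
  have y2: "y^2 = K / n" using n K by (simp add: y_def)
  define t0 where "t0 = nat \<lceil>y\<rceil>"
  have t0a: "real t0 \<ge> y" unfolding t0_def by linarith
  have t0e: "real t0 = real_of_int \<lceil>y\<rceil>" using y by (simp add: t0_def)
  have t0b: "real t0 \<le> y + 1" using t0e of_int_ceiling_le_add_one[of y] by linarith
  have t01: "t0 \<ge> 1" using t0a y by linarith
  have ny: "n * y = sqrt (n * K)"
  proof -
    have "(n * y)^2 = n * K" using y2 n by (simp add: power_mult_distrib field_simps power2_eq_square)
    then show ?thesis using n y by (metis less_eq_real_def mult_pos_pos real_sqrt_unique)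
  qed
  have Ky: "K / y = sqrt (n * K)"
  proof -
    have "(K / y)^2 = n * K" using y2 n K y by (simp add: power_divide field_simps power2_eq_square)
    then show ?thesis using K y by (metis less_eq_real_def divide_pos_pos real_sqrt_unique)
  qed
  have pw: "G t \<le> (if t \<le> t0 then n else 0) + (if t0 < t then K / (real t)^2 else 0)" if "t \<in> {1..b}" for t
    using G1[OF that] G2[OF that] by auto
  have "(\<Sum>t\<in>{1..b}. G t) \<le> (\<Sum>t\<in>{1..b}. (if t \<le> t0 then n else 0) + (if t0 < t then K / (real t)^2 else 0))"
    by (rule sum_mono) (rule pw)
  also have "\<dots> = (\<Sum>t\<in>{t\<in>{1..b}. t \<le> t0}. n) + (\<Sum>t\<in>{t\<in>{1..b}. t0 < t}. K / (real t)^2)"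
    by (simp only: sum.distrib sum.inter_filter[OF finite_atLeastAtMost])
  also have "\<dots> \<le> n * real t0 + K / real t0"
  proof -
    have "card {t\<in>{1..b}. t \<le> t0} \<le> card {1..t0}" by (rule card_mono) auto
    then have "real (card {t\<in>{1..b}. t \<le> t0}) \<le> real t0" by simp
    then have a1: "(\<Sum>t\<in>{t\<in>{1..b}. t \<le> t0}. n) \<le> n * real t0" using n by (simp add: mult.commute)
    have "{t\<in>{1..b}. t0 < t} = {t0<..b}" by auto
    then have "(\<Sum>t\<in>{t\<in>{1..b}. t0 < t}. K / (real t)^2) = K * (\<Sum>t\<in>{t0<..b}. 1 / (real t)^2)"
      by (simp add: sum_distrib_left)
    also have "\<dots> \<le> K * (1 / real t0)" using tele[OF t01, of b] K by (intro mult_left_mono) auto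
    finally show ?thesis using a1 by simp
  qed
  also have "\<dots> \<le> n * (y + 1) + K / y"
  proof -
    have "n * real t0 \<le> n * (y + 1)" using t0b n by (intro mult_left_mono) auto
    moreover have "K / real t0 \<le> K / y" using t0a y K by (intro divide_left_mono) auto
    ultimately show ?thesis by linarith
  qed
  also have "\<dots> = 2 * sqrt (n * K) + n" using ny Ky by (simp add: algebra_simps)
  finally show ?thesis .
qed

lemma final_arith:
  fixes c r s q x b T :: real
  assumes r: "r \<ge> 1" and s: "s \<ge> 1" and q: "q \<ge> 16" and x: "x \<ge> 1" and b: "b > 0"
    and c: "c \<ge> 8 * r * s * q^2" and T: "T \<le> 2 * c * x + 1"
    and main: "c * (256 * r^2 * b) * (16 * r * x) \<le> 256 * r^2 * (2 * (16 * r * x * q * s * r * b) + 256 * r^2 * b)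
        + 256 * r^2 * b * (r - 1) * T + 256 * r^2 * (2 * c * b * x)"
  shows False
proof -
  define P where "P = 256 * r^2 * b"
  have P: "P > 0" using r b by (simp add: P_def)
  have "P * (16 * c * r * x) \<le> P * (32 * r * r * s * q * x + 256 * r * r + (r - 1) * T + 2 * c * x)"
    using main unfolding P_def by (simp add: algebra_simps power2_eq_square)
  then have m: "16 * c * r * x \<le> 32 * r * r * s * q * x + 256 * r * r + (r - 1) * T + 2 * c * x"
    using P by simp
  have q2: "q^2 \<ge> 16 * q" using q by (simp add: power2_eq_square)
  have c1: "c \<ge> 128 * r * s * q"
  proof -
    have h: "8 * r * s * q^2 \<ge> 8 * r * s * (16 * q)" using q2 r s by (intro mult_left_mono) auto
    have e: "8 * r * s * (16 * q) = 128 * r * s * q" by simp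
    show ?thesis using h e c by linarith
  qed
  have c2: "c \<ge> 2048 * r"
  proof -
    have "q^2 \<ge> 256" using q2 q by simp
    then have "8 * r * s * q^2 \<ge> 8 * r * s * 256" using r s by (intro mult_left_mono) auto
    moreover have "8 * r * s * 256 \<ge> 2048 * r" using r s by simp
    ultimately show ?thesis using c by simp
  qed
  have f1: "r * x * c \<ge> r * x * (128 * r * s * q)" using c1 r x by (intro mult_left_mono) auto
  have f2: "(r - 1) * T \<le> (r - 1) * (2 * c * x + 1)" using T r by (intro mult_left_mono) auto
  have f3: "r * x * c \<ge> r * x * (2048 * r)" using c2 r x by (intro mult_left_mono) auto
  have f4: "r * x * r \<ge> r * r" using r x by simp
  have g: "16 * c * r * x \<le> r * x * c / 4 + 256 * r * r + r + 2 * (r * x * c) - 1"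
  proof -
    have "32 * r * r * s * q * x = (r * x * (128 * r * s * q)) / 4" by (simp add: algebra_simps)
    moreover have "(r - 1) * (2 * c * x + 1) = 2 * (r * x * c) - 2 * c * x + r - 1" by (simp add: algebra_simps)
    ultimately show ?thesis using m f1 f2 by linarith
  qed
  have e1: "16 * c * r * x = 16 * (r * x * c)" by simp
  have e2: "256 * r * r = 256 * (r * r)" by simp
  have e3: "r * x * (2048 * r) = 2048 * (r * x * r)" by simp
  have h3: "r * x * c \<ge> 2048 * (r * r)" using f3 f4 e3 by linarith
  have rr: "r \<le> r * r" using r by simp
  show False using g e1 e2 h3 rr r by linarith
qed

theorem lemma5p4:
  fixes r s n k :: nat and c :: real and M :: zmat
  assumes "r > 0" and "s > 0"
    and "k = 2^8 * r^2"
    and "c \<ge> 8 * real r * real s * real (k choose r)"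
    and "k dvd n"
    and "real (weight n n M) \<ge> c * real n powr (3/2)"
  shows "(\<exists>N. contains n n M (n div k) (n div k) N \<and>
             real (weight (n div k) (n div k) N) \<ge> 2 * c * real (n div k) powr (3/2))
       \<or> (\<exists>m N. m > 0 \<and> contains n n M (n * r div k) m N \<and>
             r_balanced r (n * r div k) m N \<and>
             real (weight (n * r div k) m N) \<ge> real r * real s * sqrt (real m) * real (n * r div k))"
proof (cases "n = 0")
  case True
  have "contains n n M (n div k) (n div k) (\<lambda>_ _. False)"
    using True unfolding contains_def by (auto simp: strict_mono_on_def)
  moreover have "real (weight (n div k) (n div k) (\<lambda>_ _. False)) \<ge> 2 * c * real (n div k) powr (3/2)"
    using True by (simp add: weight_def)
  ultimately show ?thesis by blast
next
  case False
  note r0 = assms(1) and s0 = assms(2) and kdef = assms(3) and cC = assms(4) and kn = assms(5) and wM = assms(6)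
  have kpos: "k > 0" using kdef r0 by simp
  define b where "b = n div k"
  have nkb: "n = k * b" using kn by (simp add: b_def)
  have bpos: "b > 0" using False nkb by (cases b) auto
  have nrk: "n * r div k = r * b" using kpos nkb by simp
  have rk: "r \<le> k"
  proof -
    have "r \<le> r * r" using r0 by simp
    also have "\<dots> \<le> 2^8 * r^2" by (simp add: power2_eq_square)
    finally show ?thesis using kdef by simp
  qed
  define a where "a i j = card {u. u < b \<and> M (i*b+u) j}" for i j
  have ab: "a i j \<le> b" for i j
  proof -
    have "a i j \<le> card {..<b}" unfolding a_def by (rule card_mono) auto
    then show ?thesis by simp
  qed
  define C where "C = real (k choose r)"
  have C256: "C \<ge> 256"
  proof -
    have "(real k / real r) ^ r \<le> C" unfolding C_def by (rule binomial_ge_n_over_k_pow_k[OF rk])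
    moreover have "real k / real r = 256 * real r" using kdef r0 by (simp add: power2_eq_square)
    moreover have "(256 * real r) ^ r \<ge> 256 * real r"
    proof -
      have "(256 * real r)^1 \<le> (256 * real r) ^ r" using r0 by (intro power_increasing) auto
      then show ?thesis by simp
    qed
    moreover have "256 * real r \<ge> 256" using r0 by simp
    ultimately show ?thesis by (metis order.trans)
  qed
  have cpos: "c \<ge> 0"
  proof -
    have "0 \<le> 8 * real r * real s * C" using C256 by simp
    then show ?thesis using cC unfolding C_def by linarith
  qed
  show ?thesis
  proof (rule ccontr)
    assume H: "\<not> ?thesis"
    have noi: "\<not> 2 * c * real b powr (3/2) \<le> real (weight b b N)" if "contains n n M b b N" for N
      using H that unfolding b_def by blast
    have noii: "\<not> real r * real s * sqrt (real m) * real (r * b) \<le> real (weight (r*b) m N)"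
      if "m > 0" "contains n n M (r*b) m N" "r_balanced r (r*b) m N" for m N
      using H that unfolding nrk by blast
    define B where "B = 2 * c * real b powr (3/2)"
    have blocks: "real (\<Sum>j\<in>S. a i j) < B" if i: "i < k" and S: "S \<subseteq> {..<n}" "card S = b" for i S
    proof -
      obtain N where N: "contains (k*b) (k*b) M b b N" "weight b b N = (\<Sum>j\<in>S. card {u. u < b \<and> M (i*b+u) j})"
        using block_sub[OF i, of S b M] S nkb by auto
      have "contains n n M b b N" using N(1) nkb by simp
      then have "\<not> B \<le> real (weight b b N)" using noi unfolding B_def by blast
      then show ?thesis using N by (simp add: a_def)
    qed
    define x where "x = sqrt (real b)"
    have x1: "x \<ge> 1" using bpos by (simp add: x_def)
    have bx: "real b powr (3/2) = real b * x" unfolding x_def by (rule powr32) simp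
    define T where "T = nat \<lceil>2 * c * x\<rceil>"
    have Tl: "real T \<ge> 2 * c * x" unfolding T_def by linarith
    have Tu: "real T \<le> 2 * c * x + 1"
    proof -
      have "2 * c * x \<ge> 0" using cpos x1 by simp
      then have "real T = real_of_int \<lceil>2 * c * x\<rceil>" by (simp add: T_def)
      then show ?thesis using of_int_ceiling_le_add_one[of "2 * c * x"] by linarith
    qed
    have heavy: "real (\<Sum>j\<in>{j. j < n \<and> T < a i j}. a i j) < B" if i: "i < k" for i
    proof (rule heavy_bound)
      show "b \<le> n" using nkb kpos by simp
      show "real (\<Sum>j\<in>S. a i j) < B" if "S \<subseteq> {..<n}" "card S = b" for S using blocks[OF i] that by blast
      have "B = real b * (2 * c * x)" unfolding B_def bx by simp
      also have "\<dots> \<le> real b * real T" using Tl by (intro mult_left_mono) auto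
      finally show "B \<le> real b * real T" .
    qed
    define G where "G t = card {j\<in>{..<n}. r \<le> card {i. i < k \<and> t \<le> a i j}}" for t
    have wsum: "weight n n M = (\<Sum>j<n. \<Sum>i<k. a i j)"
    proof -
      have "weight n n M = (\<Sum>j<n. card {x. x < n \<and> M x j})" by (rule weight_cols)
      also have "\<dots> = (\<Sum>j<n. \<Sum>i<k. a i j)" unfolding a_def nkb by (simp add: card_blocks)
      finally show ?thesis .
    qed
    have wle: "weight n n M \<le> k * (\<Sum>t\<in>{1..b}. G t) + n * ((r - 1) * T)
                 + (\<Sum>i<k. \<Sum>j\<in>{j. j < n \<and> T < a i j}. a i j)"
    proof -
      have "weight n n M \<le> (\<Sum>j<n. k * card {t\<in>{1..b}. r \<le> card {i. i < k \<and> t \<le> a i j}} + (r - 1) * T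
           + (\<Sum>i<k. if T < a i j then a i j else 0))"
        unfolding wsum by (intro sum_mono col_ineq ab)
      also have "\<dots> = k * (\<Sum>j<n. card {t\<in>{1..b}. r \<le> card {i. i < k \<and> t \<le> a i j}}) + n * ((r - 1) * T)
           + (\<Sum>i<k. \<Sum>j<n. if T < a i j then a i j else 0)"
      proof -
        have "(\<Sum>j<n. \<Sum>i<k. if T < a i j then a i j else 0) = (\<Sum>i<k. \<Sum>j<n. if T < a i j then a i j else 0)"
          by (rule sum.swap)
        then show ?thesis by (simp only: sum.distrib sum_distrib_left[symmetric] sum_constant card_lessThan) (simp add: mult.commute)
      qed
      also have "(\<Sum>j<n. card {t\<in>{1..b}. r \<le> card {i. i < k \<and> t \<le> a i j}}) = (\<Sum>t\<in>{1..b}. G t)"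
        unfolding G_def by (rule count_swap) auto
      also have "(\<Sum>i<k. \<Sum>j<n. if T < a i j then a i j else 0) = (\<Sum>i<k. \<Sum>j\<in>{j. j < n \<and> T < a i j}. a i j)"
      proof (rule sum.cong)
        fix i show "(\<Sum>j<n. if T < a i j then a i j else 0) = (\<Sum>j\<in>{j. j < n \<and> T < a i j}. a i j)"
          using sum.inter_filter[of "{..<n}" "a i" "\<lambda>j. T < a i j"] by (simp add: lessThan_def)
      qed simp
      finally show ?thesis .
    qed
    define K where "K = C * (real s * real r * real b)^2"
    have Kpos: "K > 0" using C256 s0 r0 bpos by (simp add: K_def)
    have Gn: "real (G t) \<le> real n" for t
    proof -
      have "G t \<le> card {..<n}" unfolding G_def by (rule card_mono) auto
      then show ?thesis by simp
    qed
    have GK: "real (G t) \<le> K / (real t)^2" if t: "t \<in> {1..b}" for t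
    proof (rule ccontr)
      assume "\<not> real (G t) \<le> K / (real t)^2"
      then have GK': "K / (real t)^2 < real (G t)" by simp
      define A where "A = {j\<in>{..<n}. r \<le> card {i. i < k \<and> t \<le> a i j}}"
      have fA: "finite A" unfolding A_def by simp
      have bg: "\<And>j. j \<in> A \<Longrightarrow> r \<le> card {i. i < k \<and> t \<le> a i j}" unfolding A_def by blast
      have "\<exists>R S. R \<subseteq> {..<k} \<and> card R = r \<and> S \<subseteq> A \<and> card A \<le> card S * (k choose r)
            \<and> (\<forall>j\<in>S. \<forall>i\<in>R. t \<le> a i j)" by (rule pigeon[OF fA rk]) (rule bg)
      then obtain R S where RS: "R \<subseteq> {..<k}" "card R = r" "S \<subseteq> A" "card A \<le> card S * (k choose r)"
          "\<forall>j\<in>S. \<forall>i\<in>R. t \<le> a i j" by auto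
      define m where "m = card S"
      have tpos: "real t > 0" using t by simp
      have "K / (real t)^2 < real m * C"
      proof -
        have "G t = card A" by (simp add: G_def A_def)
        then have "G t \<le> m * (k choose r)" using RS(4) unfolding m_def by simp
        then have "real (G t) \<le> real (m * (k choose r))" by (simp only: of_nat_le_iff)
        then show ?thesis using GK' unfolding C_def by simp
      qed
      then have "K < real m * C * (real t)^2" using tpos by (simp add: divide_less_eq)
      then have mt: "(real s * real r * real b)^2 < real m * (real t)^2"
        unfolding K_def using C256 by (simp add: mult.commute mult.left_commute)
      have mpos: "m > 0"
      proof (rule ccontr)
        assume "\<not> m > 0" then have "m = 0" by simp
        then show False using mt by (smt (verit) mult_eq_0_iff of_nat_0 zero_le_power2)
      qed
      have tsm: "real s * real r * real b \<le> real t * sqrt (real m)"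
      proof (rule power2_le_imp_le)
        show "(real s * real r * real b)^2 \<le> (real t * sqrt (real m))^2"
          using mt by (simp add: power_mult_distrib mult.commute)
        show "0 \<le> real t * sqrt (real m)" by simp
      qed
      have Sn: "S \<subseteq> {..<k*b}" using RS(3) nkb unfolding A_def by auto
      obtain N where N: "contains (k*b) (k*b) M (r*b) m N" "r_balanced r (r*b) m N" "weight (r*b) m N = m*(r*t)"
        using build_balanced[OF bpos r0 RS(1) RS(2) Sn m_def[symmetric]] RS(5) unfolding a_def by blast
      have "real r * real s * sqrt (real m) * real (r * b) \<le> real (weight (r*b) m N)"
      proof -
        have "real r * real s * sqrt (real m) * real (r * b) = real r * sqrt (real m) * (real s * real r * real b)"
          by (simp add: algebra_simps)
        also have "\<dots> \<le> real r * sqrt (real m) * (real t * sqrt (real m))"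
          using tsm by (intro mult_left_mono) auto
        also have "\<dots> = real (m * (r * t))" by (simp add: algebra_simps)
        finally show ?thesis using N(3) by simp
      qed
      then show False using noii[OF mpos _ N(2)] N(1) nkb by auto
    qed
    have Gsum: "(\<Sum>t\<in>{1..b}. real (G t)) \<le> 2 * sqrt (real n * K) + real n"
      using False by (intro sum_min_bound Kpos GK Gn) auto
    have hsum: "real (\<Sum>i<k. \<Sum>j\<in>{j. j < n \<and> T < a i j}. a i j) \<le> real k * B"
    proof -
      have "real (\<Sum>i<k. \<Sum>j\<in>{j. j < n \<and> T < a i j}. a i j) = (\<Sum>i<k. real (\<Sum>j\<in>{j. j < n \<and> T < a i j}. a i j))"
        by simp
      also have "\<dots> \<le> (\<Sum>i<k. B)" by (intro sum_mono less_imp_le heavy) auto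
      finally show ?thesis by simp
    qed
    define q where "q = sqrt C"
    have q16: "q \<ge> 16"
    proof -
      have "sqrt 256 \<le> q" unfolding q_def using C256 by (rule real_sqrt_le_mono)
      moreover have "sqrt (256::real) = 16" by (simp add: real_sqrt_eq_iff power2_eq_square[symmetric] del: real_sqrt_eq_iff) 
      ultimately show ?thesis by simp
    qed
    have sk: "sqrt (real k) = 16 * real r" using kdef by (simp add: real_sqrt_mult power2_eq_square)
    have sn: "sqrt (real n) = 16 * real r * x" unfolding nkb x_def by (simp add: real_sqrt_mult sk)
    have snK: "sqrt (real n * K) = 16 * real r * x * q * real s * real r * real b"
      unfolding K_def q_def by (simp add: real_sqrt_mult sn)
    have wlow: "c * real n * sqrt (real n) \<le> real (weight n n M)"
      using wM by (simp add: powr32)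
    have whigh: "real (weight n n M) \<le> real k * (2 * sqrt (real n * K) + real n) + real n * (real r - 1) * real T + real k * B"
    proof -
      have "real (weight n n M) \<le> real k * (\<Sum>t\<in>{1..b}. real (G t)) + real n * ((real r - 1) * real T)
          + real (\<Sum>i<k. \<Sum>j\<in>{j. j < n \<and> T < a i j}. a i j)"
      proof -
        define HS where "HS = (\<Sum>i<k. \<Sum>j\<in>{j. j < n \<and> T < a i j}. a i j)"
        have "real (weight n n M) \<le> real (k * (\<Sum>t\<in>{1..b}. G t) + n * ((r - 1) * T) + HS)"
          using wle unfolding HS_def by (simp only: of_nat_le_iff)
        also have "\<dots> = real k * real (\<Sum>t\<in>{1..b}. G t) + real n * (real (r - 1) * real T) + real HS"
          by (simp only: of_nat_add of_nat_mult)
        also have "real (\<Sum>t\<in>{1..b}. G t) = (\<Sum>t\<in>{1..b}. real (G t))" by (rule of_nat_sum)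
        also have "real (r - 1) = real r - 1" using r0 by (simp add: of_nat_diff)
        finally show ?thesis unfolding HS_def .
      qed
      moreover have "real k * (\<Sum>t\<in>{1..b}. real (G t)) \<le> real k * (2 * sqrt (real n * K) + real n)"
        using Gsum by (intro mult_left_mono) auto
      moreover have "real n * ((real r - 1) * real T) = real n * (real r - 1) * real T" by simp
      ultimately show ?thesis using hsum by linarith
    qed
    show False
    proof (rule final_arith[of "real r" "real s" q x "real b" c "real T"])
      show "real r \<ge> 1" "real s \<ge> 1" using r0 s0 by auto
      show "q \<ge> 16" "x \<ge> 1" "real b > 0" "real T \<le> 2 * c * x + 1" using q16 x1 bpos Tu by auto
      show "c \<ge> 8 * real r * real s * q^2" using cC C256 unfolding q_def C_def by simp
      have kk: "real k = 256 * (real r)^2" using kdef by simp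
      have nn: "real n = 256 * (real r)^2 * real b" using nkb kk by simp
      have BB: "B = 2 * c * real b * x" unfolding B_def bx by simp
      show "c * (256 * (real r)^2 * real b) * (16 * real r * x) \<le> 256 * (real r)^2 * (2 * (16 * real r * x * q * real s * real r * real b) + 256 * (real r)^2 * real b)
        + 256 * (real r)^2 * real b * (real r - 1) * real T + 256 * (real r)^2 * (2 * c * real b * x)"
      proof -
        have w1: "c * real n * (16 * real r * x) \<le> real k * (2 * (16 * real r * x * q * real s * real r * real b) + real n)
            + real n * (real r - 1) * real T + real k * B"
          using wlow whigh unfolding snK sn by linarith
        show ?thesis using w1 unfolding nn kk BB .
      qed
    qed
  qed
qed

end
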